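(* Let $\mathcal F_n$ be a class of real-valued functions of $v$, and let $\{q_{k,n,\jmath}\}$, $1\le \jmath\le \mathcal J$, $1\le k\le k_{n,\jmath}$, be functions satisfying $\sup_{1\le k\le k_{n,\jmath}}\sup_{P\in\mathbf P}\|q_{k,n,\jmath}\|_{L^\infty_P}\le B_n$ for all $1\le\jmath\le\mathcal J$, with $B_n\ge 1$. Define $$\mathcal G_n\equiv\{f(x)q_{k,n,\jmath}(z_\jmath): f\in\mathcal F_n,\ 1\le\jmath\le\mathcal J,\ 1\le k\le k_{n,\jmath}\}.$$ Then for all $\epsilon>0$ and all $P\in\mathbf P$, $$N_{[\,]}(\epsilon,\mathcal G_n,\|\cdot\|_{L^2_P})\le k_n\times N_{[\,]}(\epsilon/B_n,\mathcal F_n,\|\cdot\|_{L^2_P}).$$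
   Context: Observations are $V=(X,Z)$ with $X\in\mathbf R^{d_x}$ and $Z=(Z_1,\dots,Z_{\mathcal J})$, $Z_\jmath\in\mathbf R^{d_{z_\jmath}}$; $\mathbf P$ is a family of distributions of $V$. $k_n\equiv\sum_{\jmath=1}^{\mathcal J}k_{n,\jmath}$. For $q\ge1$, $\|f\|_{L^q_P}^q=E_P|f(V)|^q$. An $\epsilon$-bracket under $\|\cdot\|_{L^2_P}$ is a set $\{f: L\le f\le U\}$ with $\|U-L\|_{L^2_P}<\epsilon$; $N_{[\,]}(\epsilon,\mathcal G,\|\cdot\|_{L^2_P})$ is the smallest number of $\epsilon$-brackets needed to cover $\mathcal G$. *)

theory Defs
  imports "HOL-Probability.Probability"
begin

definition L2_norm :: "'v measure \<Rightarrow> ('v \<Rightarrow> real) \<Rightarrow> real" where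
  "L2_norm P g = sqrt (\<integral>v. (g v)\<^sup>2 \<partial>P)"

definition is_bracket :: "'v measure \<Rightarrow> real \<Rightarrow> ('v \<Rightarrow> real) \<Rightarrow> ('v \<Rightarrow> real) \<Rightarrow> bool" where
  "is_bracket P eps L U \<longleftrightarrow>
     L \<in> borel_measurable P \<and> U \<in> borel_measurable P \<and>
     integrable P (\<lambda>v. (U v - L v)\<^sup>2) \<and> L2_norm P (\<lambda>v. U v - L v) < eps"

definition in_bracket :: "'v measure \<Rightarrow> ('v \<Rightarrow> real) \<Rightarrow> ('v \<Rightarrow> real) \<Rightarrow> ('v \<Rightarrow> real) \<Rightarrow> bool" where
  "in_bracket P L U f \<longleftrightarrow> (\<forall>v\<in>space P. L v \<le> f v \<and> f v \<le> U v)"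

definition bracketing_number :: "real \<Rightarrow> ('v \<Rightarrow> real) set \<Rightarrow> 'v measure \<Rightarrow> enat" where
  "bracketing_number eps G P =
     (INF m \<in> {m. \<exists>Ls Us :: nat \<Rightarrow> 'v \<Rightarrow> real.
                  (\<forall>i<m. is_bracket P eps (Ls i) (Us i)) \<and>
                  (\<forall>g\<in>G. \<exists>i<m. in_bracket P (Ls i) (Us i) g)}. enat m)"

end

theory Submission
  imports Defs
begin

lemma bracket_mult:
  fixes P :: "'v measure"
  assumes br: "is_bracket P e L U" and qm: "qf \<in> borel_measurable P"
    and qb: "AE v in P. \<bar>qf v\<bar> \<le> B" and B: "B \<ge> 1"
  shows "is_bracket P (e*B) (\<lambda>v. L v * max (qf v) 0 - U v * max (- qf v) 0)
                            (\<lambda>v. U v * max (qf v) 0 - L v * max (- qf v) 0)"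
proof -
  have Lm: "L \<in> borel_measurable P" and Um: "U \<in> borel_measurable P"
    and I: "integrable P (\<lambda>v. (U v - L v)\<^sup>2)" and N: "L2_norm P (\<lambda>v. U v - L v) < e"
    using br unfolding is_bracket_def by auto
  have eq: "\<And>v. (U v * max (qf v) 0 - L v * max (- qf v) 0) - (L v * max (qf v) 0 - U v * max (- qf v) 0)
      = (U v - L v) * \<bar>qf v\<bar>"
    by (simp add: max_def algebra_simps abs_if)
  have I2: "integrable P (\<lambda>v. B\<^sup>2 * (U v - L v)\<^sup>2)" using I by simp
  have ptw: "AE v in P. ((U v - L v) * \<bar>qf v\<bar>)\<^sup>2 \<le> B\<^sup>2 * (U v - L v)\<^sup>2"
    using qb
  proof (rule AE_mp, intro AE_I2 impI)
    fix v assume "\<bar>qf v\<bar> \<le> B"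
    then have "\<bar>qf v\<bar>\<^sup>2 \<le> B\<^sup>2" by (metis abs_ge_zero power_mono)
    then have "(U v - L v)\<^sup>2 * \<bar>qf v\<bar>\<^sup>2 \<le> (U v - L v)\<^sup>2 * B\<^sup>2"
      by (simp add: mult_left_mono)
    then show "((U v - L v) * \<bar>qf v\<bar>)\<^sup>2 \<le> B\<^sup>2 * (U v - L v)\<^sup>2"
      by (simp add: power_mult_distrib mult.commute)
  qed
  have meas: "(\<lambda>v. ((U v - L v) * \<bar>qf v\<bar>)\<^sup>2) \<in> borel_measurable P"
    using Lm Um qm by measurable
  have I3: "integrable P (\<lambda>v. ((U v - L v) * \<bar>qf v\<bar>)\<^sup>2)"
    by (rule Bochner_Integration.integrable_bound[OF I2 meas]) (use ptw in \<open>auto elim: AE_mp\<close>)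
  have int_le: "(\<integral>v. ((U v - L v) * \<bar>qf v\<bar>)\<^sup>2 \<partial>P) \<le> (\<integral>v. B\<^sup>2 * (U v - L v)\<^sup>2 \<partial>P)"
    by (rule integral_mono_AE[OF I3 I2 ptw])
  have "L2_norm P (\<lambda>v. (U v - L v) * \<bar>qf v\<bar>) \<le> sqrt (B\<^sup>2 * (\<integral>v. (U v - L v)\<^sup>2 \<partial>P))"
    unfolding L2_norm_def using int_le by simp
  also have "\<dots> = B * L2_norm P (\<lambda>v. U v - L v)"
    unfolding L2_norm_def using B by (simp add: real_sqrt_mult)
  also have "\<dots> < B * e" using N B by simp
  finally have "L2_norm P (\<lambda>v. (U v - L v) * \<bar>qf v\<bar>) < e * B" by (simp add: mult.commute)
  then show ?thesis unfolding is_bracket_def eq using Lm Um qm I3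
    by (auto intro!: borel_measurable_diff borel_measurable_times borel_measurable_max)
qed

lemma in_bracket_mult:
  assumes "in_bracket P L U f"
  shows "in_bracket P (\<lambda>v. L v * max (qf v) 0 - U v * max (- qf v) 0)
                      (\<lambda>v. U v * max (qf v) 0 - L v * max (- qf v) 0) (\<lambda>v. f v * qf v)"
  unfolding in_bracket_def
proof
  fix v assume "v \<in> space P"
  then have a: "L v \<le> f v" "f v \<le> U v" using assms unfolding in_bracket_def by auto
  show "L v * max (qf v) 0 - U v * max (- qf v) 0 \<le> f v * qf v \<and>
        f v * qf v \<le> U v * max (qf v) 0 - L v * max (- qf v) 0"
  proof (cases "qf v \<ge> 0")
    case True then show ?thesis using a by (simp add: max_def mult_right_mono)
  next
    case False then show ?thesis using a by (simp add: max_def mult_right_mono_neg)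
  qed
qed


theorem lemmaB1:
  fixes PP :: "'v measure set"
    and F :: "('v \<Rightarrow> real) set"
    and zc :: "nat \<Rightarrow> 'v \<Rightarrow> 'z"
    and q :: "nat \<Rightarrow> nat \<Rightarrow> 'z \<Rightarrow> real"
    and J :: nat and kn :: "nat \<Rightarrow> nat" and B :: real
  assumes prob: "\<And>P. P \<in> PP \<Longrightarrow> prob_space P"
    and B_ge: "B \<ge> 1"
    and q_meas: "\<And>P j k. P \<in> PP \<Longrightarrow> 1 \<le> j \<Longrightarrow> j \<le> J \<Longrightarrow> 1 \<le> k \<Longrightarrow> k \<le> kn j \<Longrightarrow>
                   (\<lambda>v. q j k (zc j v)) \<in> borel_measurable P"
    and q_bound: "\<And>P j k. P \<in> PP \<Longrightarrow> 1 \<le> j \<Longrightarrow> j \<le> J \<Longrightarrow> 1 \<le> k \<Longrightarrow> k \<le> kn j \<Longrightarrow>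
                   (AE v in P. \<bar>q j k (zc j v)\<bar> \<le> B)"
    and eps: "eps > 0"
    and P: "P \<in> PP"
  shows "bracketing_number eps
           {(\<lambda>v. f v * q j k (zc j v)) | f j k. f \<in> F \<and> 1 \<le> j \<and> j \<le> J \<and> 1 \<le> k \<and> k \<le> kn j} P
         \<le> enat (\<Sum>j=1..J. kn j) * bracketing_number (eps / B) F P"
proof -
  define G where "G = {(\<lambda>v. f v * q j k (zc j v)) | f j k. f \<in> F \<and> 1 \<le> j \<and> j \<le> J \<and> 1 \<le> k \<and> k \<le> kn j}"
  define K where "K = (\<Sum>j=1..J. kn j)"
  define SF where "SF = {m. \<exists>Ls Us :: nat \<Rightarrow> 'v \<Rightarrow> real.
                  (\<forall>i<m. is_bracket P (eps/B) (Ls i) (Us i)) \<and>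
                  (\<forall>g\<in>F. \<exists>i<m. in_bracket P (Ls i) (Us i) g)}"
  define SG where "SG = {m. \<exists>Ls Us :: nat \<Rightarrow> 'v \<Rightarrow> real.
                  (\<forall>i<m. is_bracket P eps (Ls i) (Us i)) \<and>
                  (\<forall>g\<in>G. \<exists>i<m. in_bracket P (Ls i) (Us i) g)}"
  have NF: "bracketing_number (eps / B) F P = (INF m \<in> SF. enat m)"
    unfolding bracketing_number_def SF_def by simp
  have NG: "bracketing_number eps G P = (INF m \<in> SG. enat m)"
    unfolding bracketing_number_def SG_def by simp
  define I where "I = (SIGMA j:{1..J}. {1..kn j})"
  have cardI: "card I = K" unfolding I_def K_def by simp
  have finI: "finite I" unfolding I_def by simp
  obtain h where h: "bij_betw h {0..<K} I"
    using ex_bij_betw_nat_finite[OF finI] cardI by metis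
  define qq where "qq p = (\<lambda>v. q (fst p) (snd p) (zc (fst p) v))" for p
  have key: "K * m \<in> SG" if mSF: "m \<in> SF" for m
  proof -
    obtain Ls Us where br: "\<forall>i<m. is_bracket P (eps/B) (Ls i) (Us i)"
      and cov: "\<forall>g\<in>F. \<exists>i<m. in_bracket P (Ls i) (Us i) g"
      using mSF unfolding SF_def by blast
    define Ls' where "Ls' n = (\<lambda>v. Ls (n mod m) v * max (qq (h (n div m)) v) 0
                                    - Us (n mod m) v * max (- qq (h (n div m)) v) 0)" for n
    define Us' where "Us' n = (\<lambda>v. Us (n mod m) v * max (qq (h (n div m)) v) 0
                                    - Ls (n mod m) v * max (- qq (h (n div m)) v) 0)" for n
    have "\<forall>n<K*m. is_bracket P eps (Ls' n) (Us' n)"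
    proof (intro allI impI)
      fix n assume n: "n < K*m"
      then have m0: "m > 0" by (cases m) auto
      have "n div m < K" using n m0 by (simp add: div_less_iff_less_mult mult.commute)
      then have hI: "h (n div m) \<in> I" using h by (auto simp: bij_betw_def)
      have mm: "n mod m < m" using m0 by simp
      have "is_bracket P (eps/B*B) (Ls' n) (Us' n)"
        unfolding Ls'_def Us'_def
        apply (rule bracket_mult[OF br[rule_format, OF mm] _ _ B_ge])
        using hI q_meas[OF P] q_bound[OF P] unfolding I_def qq_def by auto
      then show "is_bracket P eps (Ls' n) (Us' n)" using B_ge by simp
    qed
    moreover have "\<forall>g\<in>G. \<exists>n<K*m. in_bracket P (Ls' n) (Us' n) g"
    proof
      fix g assume "g \<in> G"
      then obtain f j k where g: "g = (\<lambda>v. f v * q j k (zc j v))" and f: "f \<in> F"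
        and jk: "1 \<le> j" "j \<le> J" "1 \<le> k" "k \<le> kn j"
        unfolding G_def by blast
      obtain i where i: "i < m" "in_bracket P (Ls i) (Us i) f" using cov f by blast
      have "(j,k) \<in> I" using jk unfolding I_def by auto
      then obtain a where a: "a < K" "h a = (j,k)" using h
        by (metis atLeastLessThan_iff bij_betw_def imageE)
      define n where "n = a*m + i"
      have nd: "n div m = a" "n mod m = i" using i(1) unfolding n_def by auto
      have "n < K*m"
      proof -
        have "n < a*m + m" using i(1) unfolding n_def by simp
        also have "\<dots> = (a+1)*m" by simp
        also have "\<dots> \<le> K*m" using a(1) by (intro mult_right_mono) auto
        finally show ?thesis .
      qed
      moreover have "in_bracket P (Ls' n) (Us' n) g"
        unfolding Ls'_def Us'_def nd a(2) g qq_def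
        using in_bracket_mult[OF i(2)] by simp
      ultimately show "\<exists>n<K*m. in_bracket P (Ls' n) (Us' n) g" by blast
    qed
    ultimately show ?thesis unfolding SG_def by blast
  qed
  show ?thesis
  proof (cases "K = 0")
    case True
    then have "I = {}" using cardI finI by simp
    then have "G = {}" unfolding G_def I_def by (force simp: Sigma_empty_iff)
    then have "0 \<in> SG" unfolding SG_def by auto
    then have "bracketing_number eps G P \<le> 0" unfolding NG
      by (metis INF_lower zero_enat_def)
    then show ?thesis unfolding G_def K_def by simp
  next
    case False
    show ?thesis
    proof (cases "SF = {}")
      case True
      then have "bracketing_number (eps / B) F P = \<infinity>" unfolding NF by (simp add: top_enat_def)
      then have "enat K * bracketing_number (eps / B) F P = \<infinity>" using False
        by (simp add: imult_is_infinity zero_enat_def)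
      then have "bracketing_number eps G P \<le> enat K * bracketing_number (eps / B) F P" by simp
      then show ?thesis unfolding G_def K_def .
    next
      case ne: False
      define m0 where "m0 = (LEAST m. m \<in> SF)"
      have m0: "m0 \<in> SF" unfolding m0_def using ne by (metis LeastI ex_in_conv)
      have "(INF m \<in> SF. enat m) = enat m0"
      proof (rule antisym)
        show "(INF m \<in> SF. enat m) \<le> enat m0" using m0 by (rule INF_lower)
        show "enat m0 \<le> (INF m \<in> SF. enat m)"
          by (rule INF_greatest) (simp add: m0_def Least_le)
      qed
      moreover have "bracketing_number eps G P \<le> enat (K * m0)"
        unfolding NG using key[OF m0] by (rule INF_lower)
      ultimately show ?thesis unfolding NF G_def K_def by simp
    qed
  qed
qed

end
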